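(* Let $G$ be a compact group with Haar probability measure $dg$, acting linearly and continuously on a finite-dimensional real vector space $V$. Fix $v\in V$ and a linear function $\ell:V\to\mathbb{R}$, let $f(g)=\ell(gv)$, and let $k$ be a positive integer. Then $$\|f\|_{2k}\le\|f\|_\infty\le \binom{\dim V+k-1}{k}^{1/(2k)}\|f\|_{2k}.$$
   Context: For $f:G\to\mathbb{R}$, $\|f\|_\infty=\max_{g\in G}|f(g)|$ and $\|f\|_{2k}=\left(\int_G f^{2k}(g)\,dg\right)^{1/(2k)}$. *)

theory Defs
  imports "HOL-Probability.Probability_Measure" "HOL-Algebra.Group"
begin

definition compact_group :: "('g::t2_space, 'b) monoid_scheme \<Rightarrow> bool" where
  "compact_group G \<longleftrightarrow> group G \<and> carrier G = UNIV \<and> compact (UNIV :: 'g set) \<and>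
     continuous_on UNIV (\<lambda>p::'g \<times> 'g. fst p \<otimes>\<^bsub>G\<^esub> snd p) \<and>
     continuous_on UNIV (\<lambda>x. inv\<^bsub>G\<^esub> x)"

definition haar_probability :: "('g::t2_space, 'b) monoid_scheme \<Rightarrow> 'g measure \<Rightarrow> bool" where
  "haar_probability G M \<longleftrightarrow> sets M = sets borel \<and> prob_space M \<and>
     (\<forall>g A. A \<in> sets borel \<longrightarrow> emeasure M ((\<lambda>x. g \<otimes>\<^bsub>G\<^esub> x) ` A) = emeasure M A)"

definition continuous_linear_action ::
    "('g::t2_space, 'b) monoid_scheme \<Rightarrow> ('g \<Rightarrow> 'v::euclidean_space \<Rightarrow> 'v) \<Rightarrow> bool" where
  "continuous_linear_action G act \<longleftrightarrow> (\<forall>g. linear (act g)) \<and> act \<one>\<^bsub>G\<^esub> = id \<and>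
     (\<forall>g h. act (g \<otimes>\<^bsub>G\<^esub> h) = act g \<circ> act h) \<and>
     continuous_on UNIV (\<lambda>p::'g \<times> 'v. act (fst p) (snd p))"

definition sup_norm :: "('g \<Rightarrow> real) \<Rightarrow> real" where
  "sup_norm f = (SUP g. \<bar>f g\<bar>)"

definition Lp_even_norm :: "'g measure \<Rightarrow> nat \<Rightarrow> ('g \<Rightarrow> real) \<Rightarrow> real" where
  "Lp_even_norm M k f = (integral\<^sup>L M (\<lambda>g. f g ^ (2 * k))) powr (1 / real (2 * k))"

end

theory Submission
  imports Defs
begin


definition spn :: "'i set \<Rightarrow> ('i \<Rightarrow> 'g \<Rightarrow> real) \<Rightarrow> ('g \<Rightarrow> real) set" where
  "spn I F = {f. \<exists>c. f = (\<lambda>x. \<Sum>i\<in>I. c i * F i x)}"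

lemma spn_zero: "(\<lambda>x. 0) \<in> spn I F"
  unfolding spn_def by (rule CollectI, rule exI[of _ "\<lambda>_. 0"]) simp

lemma spn_add: "f \<in> spn I F \<Longrightarrow> g \<in> spn I F \<Longrightarrow> (\<lambda>x. f x + g x) \<in> spn I F"
  unfolding spn_def
  apply clarify
  subgoal for c d by (rule exI[of _ "\<lambda>i. c i + d i"]) (simp add: distrib_right sum.distrib)
  done

lemma spn_scale: "f \<in> spn I F \<Longrightarrow> (\<lambda>x. a * f x) \<in> spn I F"
  unfolding spn_def
  apply clarify
  subgoal for c by (rule exI[of _ "\<lambda>i. a * c i"]) (simp add: sum_distrib_left mult.assoc)
  done

lemma spn_sum: "finite A \<Longrightarrow> (\<And>a. a \<in> A \<Longrightarrow> g a \<in> spn I F) \<Longrightarrow> (\<lambda>x. \<Sum>a\<in>A. g a x) \<in> spn I F"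
proof (induction A rule: finite_induct)
  case empty then show ?case by (simp add: spn_zero)
next
  case (insert a A)
  then show ?case using spn_add[of "g a" I F "\<lambda>x. \<Sum>a\<in>A. g a x"] by simp
qed

lemma spn_gen: "finite I \<Longrightarrow> j \<in> I \<Longrightarrow> F j \<in> spn I F"
  unfolding spn_def
proof (rule CollectI, rule exI[of _ "\<lambda>i. if i = j then 1 else 0"], rule ext)
  fix x assume "finite I" "j \<in> I"
  have "(\<Sum>i\<in>I. (if i = j then 1 else 0) * F i x) = (\<Sum>i\<in>I. if i = j then F i x else 0)"
    by (rule sum.cong) auto
  then show "F j x = (\<Sum>i\<in>I. (if i = j then 1 else 0) * F i x)" using \<open>j \<in> I\<close> \<open>finite I\<close> by simp
qed

lemma spn_trans:
  assumes "finite I" "\<And>i. i \<in> I \<Longrightarrow> F i \<in> spn J E" "f \<in> spn I F"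
  shows "f \<in> spn J E"
proof -
  obtain c where c: "f = (\<lambda>x. \<Sum>i\<in>I. c i * F i x)" using assms(3) unfolding spn_def by blast
  show ?thesis unfolding c
    by (rule spn_sum[OF assms(1)], rule spn_scale, rule assms(2))
qed

lemma spn_mono: "finite I' \<Longrightarrow> I \<subseteq> I' \<Longrightarrow> f \<in> spn I F \<Longrightarrow> f \<in> spn I' F"
  by (rule spn_trans[of I]) (auto intro: spn_gen rev_finite_subset)

lemma spn_cong: "(\<And>i. i \<in> I \<Longrightarrow> F i = F' i) \<Longrightarrow> spn I F = spn I F'"
  unfolding spn_def by (auto cong: sum.cong)

lemma spn_cont: "(\<And>i. i \<in> I \<Longrightarrow> continuous_on UNIV (F i)) \<Longrightarrow> f \<in> spn I F \<Longrightarrow> continuous_on UNIV f"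
  unfolding spn_def by (auto intro!: continuous_intros)

lemma spn_comp: "finite I \<Longrightarrow> (\<And>i. i \<in> I \<Longrightarrow> (\<lambda>x. F i (h x)) \<in> spn I F) \<Longrightarrow> f \<in> spn I F \<Longrightarrow>
   (\<lambda>x. f (h x)) \<in> spn I F"
proof -
  assume a: "finite I" "\<And>i. i \<in> I \<Longrightarrow> (\<lambda>x. F i (h x)) \<in> spn I F" "f \<in> spn I F"
  then obtain c where c: "f = (\<lambda>x. \<Sum>i\<in>I. c i * F i x)" unfolding spn_def by blast
  show ?thesis unfolding c
    by (rule spn_sum[OF a(1)], rule spn_scale[of "\<lambda>x. F _ (h x)"], rule a(2))
qed

locale L2setup = prob_space M for M :: "'g::topological_space measure" +
  assumes sets_M: "sets M = sets borel" and cpt: "compact (UNIV::'g set)"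
begin

lemma cont_meas: "continuous_on UNIV (f::'g \<Rightarrow> real) \<Longrightarrow> f \<in> borel_measurable M"
  using borel_measurable_continuous_onI measurable_cong_sets[OF sets_M refl] by blast

lemma cont_bounded: "continuous_on UNIV (f::'g \<Rightarrow> real) \<Longrightarrow> \<exists>B. \<forall>x. \<bar>f x\<bar> \<le> B"
proof -
  assume "continuous_on UNIV f"
  then have "compact (f ` UNIV)" using compact_continuous_image cpt by blast
  then have "bounded (f ` UNIV)" by (rule compact_imp_bounded)
  then show ?thesis unfolding bounded_iff by auto
qed

lemma cont_int: "continuous_on UNIV (f::'g \<Rightarrow> real) \<Longrightarrow> integrable M f"
proof -
  assume c: "continuous_on UNIV f"
  then obtain B where "\<forall>x. \<bar>f x\<bar> \<le> B" using cont_bounded by blast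
  then show ?thesis by (intro integrable_const_bound[where B=B]) (auto simp: cont_meas c)
qed

definition ip :: "('g \<Rightarrow> real) \<Rightarrow> ('g \<Rightarrow> real) \<Rightarrow> real" where
  "ip f g = integral\<^sup>L M (\<lambda>x. f x * g x)"

lemma ip_comm: "ip f g = ip g f" unfolding ip_def by (simp add: mult.commute)

lemma ip_nonneg: "ip f f \<ge> 0" unfolding ip_def by simp

lemma ip_sum_left:
  assumes "\<And>i. i \<in> A \<Longrightarrow> continuous_on UNIV (f i)" "continuous_on UNIV g"
  shows "ip (\<lambda>x. \<Sum>i\<in>A. c i * f i x) g = (\<Sum>i\<in>A. c i * ip (f i) g)"
proof -
  have "ip (\<lambda>x. \<Sum>i\<in>A. c i * f i x) g = integral\<^sup>L M (\<lambda>x. \<Sum>i\<in>A. c i * (f i x * g x))"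
    unfolding ip_def by (simp add: sum_distrib_right mult.assoc)
  also have "\<dots> = (\<Sum>i\<in>A. c i * ip (f i) g)"
    unfolding ip_def using assms
    by (subst Bochner_Integration.integral_sum) (auto intro!: cont_int continuous_intros simp: integral_mult_right_zero)
  finally show ?thesis .
qed

lemma ip_diff_left:
  assumes "continuous_on UNIV f" "continuous_on UNIV f'" "continuous_on UNIV g"
  shows "ip (\<lambda>x. f x - f' x) g = ip f g - ip f' g"
proof -
  have "ip (\<lambda>x. f x - f' x) g = integral\<^sup>L M (\<lambda>x. f x * g x - f' x * g x)"
    unfolding ip_def by (simp add: left_diff_distrib)
  also have "\<dots> = ip f g - ip f' g" unfolding ip_def
    by (rule Bochner_Integration.integral_diff) (auto intro!: cont_int continuous_intros assms)
  finally show ?thesis .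
qed

lemma ip_scale_left: "ip (\<lambda>x. a * f x) g = a * ip f g"
  unfolding ip_def by (simp add: mult.assoc)

definition orthon :: "'i set \<Rightarrow> ('i \<Rightarrow> 'g \<Rightarrow> real) \<Rightarrow> bool" where
  "orthon J e \<longleftrightarrow> (\<forall>j\<in>J. continuous_on UNIV (e j)) \<and>
     (\<forall>j\<in>J. \<forall>j'\<in>J. ip (e j) (e j') = (if j = j' then 1 else 0))"

lemma orthon_cont: "orthon J e \<Longrightarrow> j \<in> J \<Longrightarrow> continuous_on UNIV (e j)"
  unfolding orthon_def by blast

lemma orthon_ip: "orthon J e \<Longrightarrow> j \<in> J \<Longrightarrow> j' \<in> J \<Longrightarrow> ip (e j) (e j') = (if j = j' then 1 else 0)"
  unfolding orthon_def by blast

lemma coeff: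
  assumes "orthon J e" "finite J" "m \<in> J"
  shows "ip (\<lambda>x. \<Sum>j\<in>J. c j * e j x) (e m) = c m"
proof -
  have "ip (\<lambda>x. \<Sum>j\<in>J. c j * e j x) (e m) = (\<Sum>j\<in>J. c j * ip (e j) (e m))"
    by (rule ip_sum_left) (use assms orthon_cont in auto)
  also have "\<dots> = (\<Sum>j\<in>J. if j = m then c j else 0)"
    by (rule sum.cong) (auto simp: orthon_ip[OF assms(1)] assms(3))
  also have "\<dots> = c m" using assms by simp
  finally show ?thesis .
qed

lemma ip_span_self:
  assumes "orthon J e" "finite J"
  shows "ip (\<lambda>x. \<Sum>j\<in>J. c j * e j x) (\<lambda>x. \<Sum>j\<in>J. c j * e j x) = (\<Sum>j\<in>J. (c j)^2)"
proof -
  have "ip (\<lambda>x. \<Sum>j\<in>J. c j * e j x) (\<lambda>x. \<Sum>j\<in>J. c j * e j x)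
     = (\<Sum>j\<in>J. c j * ip (e j) (\<lambda>x. \<Sum>j\<in>J. c j * e j x))"
    by (rule ip_sum_left) (use assms orthon_cont in \<open>auto intro!: continuous_intros\<close>)
  also have "\<dots> = (\<Sum>j\<in>J. (c j)^2)"
    by (rule sum.cong) (use assms in \<open>auto simp: ip_comm[of "e _"] coeff power2_eq_square\<close>)
  finally show ?thesis .
qed

lemma bessel:
  assumes "orthon J f" "finite J" "continuous_on UNIV k"
  shows "(\<Sum>j\<in>J. (ip k (f j))^2) \<le> ip k k"
proof -
  define a where "a j = ip k (f j)" for j
  define s where "s x = (\<Sum>j\<in>J. a j * f j x)" for x
  have cs: "continuous_on UNIV s" unfolding s_def using assms orthon_cont
    by (auto intro!: continuous_intros)
  have ss: "ip s s = (\<Sum>j\<in>J. (a j)^2)" unfolding s_def[abs_def] by (rule ip_span_self[OF assms(1,2)])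
  have ks: "ip s k = (\<Sum>j\<in>J. (a j)^2)" unfolding s_def[abs_def]
    by (subst ip_sum_left) (use assms orthon_cont in \<open>auto simp: a_def ip_comm[of k] power2_eq_square\<close>)
  have "0 \<le> ip (\<lambda>x. k x - s x) (\<lambda>x. k x - s x)" by (rule ip_nonneg)
  also have "\<dots> = ip k (\<lambda>x. k x - s x) - ip s (\<lambda>x. k x - s x)"
    by (rule ip_diff_left) (use assms cs in \<open>auto intro!: continuous_intros\<close>)
  also have "ip k (\<lambda>x. k x - s x) = ip k k - ip s k"
    by (subst ip_comm, subst ip_diff_left) (use assms cs in \<open>auto simp: ip_comm\<close>)
  also have "ip s (\<lambda>x. k x - s x) = ip k s - ip s s"
    by (subst ip_comm, subst ip_diff_left) (use assms cs in \<open>auto simp: ip_comm\<close>)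
  finally have "0 \<le> ip k k - ip s k - (ip k s - ip s s)" .
  moreover have "ip k s = ip s k" by (rule ip_comm)
  ultimately show ?thesis using ss ks by (simp add: a_def)
qed

lemma gram_schmidt:
  assumes "finite I" "\<And>i. i \<in> I \<Longrightarrow> continuous_on UNIV (F i)"
    and pos: "\<And>f. continuous_on UNIV f \<Longrightarrow> ip f f = 0 \<Longrightarrow> \<forall>x. f x = 0"
  shows "\<exists>J e. J \<subseteq> I \<and> orthon J e \<and> (\<forall>j\<in>J. e j \<in> spn I F) \<and> (\<forall>i\<in>I. F i \<in> spn J e)"
  using assms(1,2)
proof (induction I rule: finite_induct)
  case empty
  show ?case by (rule exI[of _ "{}"]) (auto simp: orthon_def)
next
  case (insert a I)
  from insert obtain J e where J: "J \<subseteq> I" "orthon J e" "\<forall>j\<in>J. e j \<in> spn I F" "\<forall>i\<in>I. F i \<in> spn J e"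
    by auto
  have fJ: "finite J" using J(1) insert(1) by (rule rev_finite_subset[rotated])
  have aJ: "a \<notin> J" using J(1) insert(2) by auto
  have fin': "finite (insert a I)" using insert(1) by simp
  have eJ': "\<forall>j\<in>J. e j \<in> spn (insert a I) F" using J(3) spn_mono[OF fin'] by blast
  define G where "G x = F a x - (\<Sum>j\<in>J. ip (F a) (e j) * e j x)" for x
  have cFa: "continuous_on UNIV (F a)" using insert by auto
  have cG: "continuous_on UNIV G" unfolding G_def using J(2) orthon_cont cFa
    by (auto intro!: continuous_intros)
  have Gin: "G \<in> spn (insert a I) F"
  proof -
    have s1: "(\<lambda>x. \<Sum>j\<in>J. ip (F a) (e j) * e j x) \<in> spn (insert a I) F"
      by (rule spn_sum[OF fJ], rule spn_scale) (use eJ' in auto)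
    have "(\<lambda>x. F a x + (-1) * (\<Sum>j\<in>J. ip (F a) (e j) * e j x)) \<in> spn (insert a I) F"
      by (rule spn_add[OF spn_gen[OF fin'] spn_scale[OF s1]]) simp
    then show ?thesis unfolding G_def[abs_def] by simp
  qed
  have Gorth: "ip G (e m) = 0" if "m \<in> J" for m
  proof -
    have "ip G (e m) = ip (F a) (e m) - ip (\<lambda>x. \<Sum>j\<in>J. ip (F a) (e j) * e j x) (e m)"
      unfolding G_def[abs_def] using J(2) orthon_cont that cFa
      by (subst ip_diff_left) (auto intro!: continuous_intros)
    also have "\<dots> = 0" using coeff[OF J(2) fJ that] by simp
    finally show ?thesis .
  qed
  show ?case
  proof (cases "ip G G = 0")
    case True
    then have G0: "\<forall>x. G x = 0" using pos cG by blast
    have "F a = (\<lambda>x. \<Sum>j\<in>J. ip (F a) (e j) * e j x)" using G0 unfolding G_def by (auto simp: fun_eq_iff)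
    then have "F a \<in> spn J e" unfolding spn_def by (intro CollectI exI[of _ "\<lambda>j. ip (F a) (e j)"])
    then show ?thesis using J eJ' by (intro exI[of _ J] exI[of _ e]) auto
  next
    case False
    then have pG: "ip G G > 0" using ip_nonneg[of G] by linarith
    define nr where "nr = sqrt (ip G G)"
    have nr: "nr > 0" "nr * nr = ip G G" using pG unfolding nr_def by auto
    define e' where "e' = e(a := (\<lambda>x. G x / nr))"
    have e'J: "\<forall>j\<in>J. e' j = e j" using aJ unfolding e'_def by auto
    have e'a: "e' a = (\<lambda>x. (1/nr) * G x)" unfolding e'_def by auto
    have on: "orthon (insert a J) e'"
      unfolding orthon_def
    proof (intro conjI ballI)
      fix j assume "j \<in> insert a J"
      then show "continuous_on UNIV (e' j)" using e'J e'a cG J(2) orthon_cont nr(1)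
        by (auto intro!: continuous_intros)
    next
      fix j j' assume jj: "j \<in> insert a J" "j' \<in> insert a J"
      have 1: "ip (e' a) (e' a) = 1" unfolding e'a ip_scale_left
        by (subst ip_comm, subst ip_scale_left) (use nr in \<open>simp flip: nr(2)\<close>)
      have 2: "ip (e' a) (e' m) = 0" if "m \<in> J" for m
        unfolding e'a ip_scale_left using that e'J Gorth by simp
      show "ip (e' j) (e' j') = (if j = j' then 1 else 0)"
      proof (cases "j = a")
        case True
        then show ?thesis using jj 1 2[of j'] aJ by (cases "j' = a") auto
      next
        case False
        then have j: "j \<in> J" using jj by auto
        show ?thesis
        proof (cases "j' = a")
          case True
          then show ?thesis using 2[of j] j aJ ip_comm[of "e' a" "e' j"] by auto
        next
          case False
          then show ?thesis using j jj e'J orthon_ip[OF J(2) j, of j'] by auto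
        qed
      qed
    qed
    have Fa: "F a \<in> spn (insert a J) e'"
    proof -
      have "F a = (\<lambda>x. nr * e' a x + (\<Sum>j\<in>J. ip (F a) (e j) * e' j x))"
        using nr e'J unfolding e'a G_def by (auto simp: fun_eq_iff)
      also have "\<dots> \<in> spn (insert a J) e'"
        by (intro spn_add spn_scale spn_sum fJ spn_gen) (use fJ in auto)
      finally show ?thesis .
    qed
    have "F i \<in> spn (insert a J) e'" if "i \<in> I" for i
    proof -
      have "F i \<in> spn J e'" using J(4) that spn_cong[of J e' e] e'J by auto
      then show ?thesis by (rule spn_mono[rotated 2]) (use fJ in auto)
    qed
    moreover have "e' a \<in> spn (insert a I) F" unfolding e'a by (rule spn_scale[OF Gin])
    ultimately show ?thesis using on Fa J e'J eJ'
      by (intro exI[of _ "insert a J"] exI[of _ e']) auto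
  qed
qed

end


context L2setup begin
lemma key_bound:
  fixes mul :: "'g \<Rightarrow> 'g \<Rightarrow> 'g"
  assumes fin: "finite I" and cF: "\<And>i. i \<in> I \<Longrightarrow> continuous_on UNIV (F i)"
    and pos: "\<And>f. continuous_on UNIV f \<Longrightarrow> ip f f = 0 \<Longrightarrow> \<forall>x. f x = 0"
    and mulc: "\<And>h. continuous_on UNIV (mul h)"
    and haar: "\<And>h (f::'g \<Rightarrow> real). continuous_on UNIV f \<Longrightarrow> integral\<^sup>L M (\<lambda>x. f (mul h x)) = integral\<^sup>L M f"
    and trans: "\<And>x y. \<exists>h. mul h x = y"
    and inv: "\<And>h i. i \<in> I \<Longrightarrow> (\<lambda>x. F i (mul h x)) \<in> spn I F"
    and f: "f \<in> spn I F"
  shows "(f x)^2 \<le> real (card I) * ip f f"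
proof -
  have "\<exists>J e. J \<subseteq> I \<and> orthon J e \<and> (\<forall>j\<in>J. e j \<in> spn I F) \<and> (\<forall>i\<in>I. F i \<in> spn J e)"
    by (rule gram_schmidt[of I F]) (use fin cF pos in auto)
  then obtain J e where J: "J \<subseteq> I" "orthon J e" "\<forall>j\<in>J. e j \<in> spn I F" "\<forall>i\<in>I. F i \<in> spn J e"
    by (elim exE conjE) (rule that, assumption+)
  have fJ: "finite J" using J(1) fin by (rule rev_finite_subset[rotated])
  have spIJ: "g \<in> spn J e" if "g \<in> spn I F" for g using spn_trans[OF fin] J(4) that by blast
  have ce: "continuous_on UNIV (e j)" if "j \<in> J" for j using orthon_cont[OF J(2) that] .
  define K where "K x = (\<Sum>j\<in>J. (e j x)^2)" for x
  have cs: "(g x)^2 \<le> ip g g * K x" if gin: "g \<in> spn J e" for g x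
  proof -
    obtain c where c: "g = (\<lambda>x. \<Sum>j\<in>J. c j * e j x)" using gin unfolding spn_def by blast
    have "ip g g = (\<Sum>j\<in>J. (c j)^2)" unfolding c by (rule ip_span_self[OF J(2) fJ])
    then show ?thesis unfolding K_def using Cauchy_Schwarz_ineq_sum[of c "\<lambda>j. e j x" J]
      by (simp add: c)
  qed
  have Kle: "K (mul h x) \<le> K x" for h x
  proof -
    define fj where "fj j y = e j (mul h y)" for j y
    have cfj: "continuous_on UNIV (fj j)" if "j \<in> J" for j
      unfolding fj_def by (rule continuous_on_compose2[OF ce[OF that] mulc]) auto
    have on: "orthon J fj" unfolding orthon_def
    proof (intro conjI ballI)
      fix j j' assume jj: "j \<in> J" "j' \<in> J"
      have cc: "continuous_on UNIV (\<lambda>z. e j z * e j' z)" using jj ce by (auto intro!: continuous_intros)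
      have "ip (fj j) (fj j') = ip (e j) (e j')"
        unfolding ip_def fj_def using haar[OF cc, of h] by simp
      then show "ip (fj j) (fj j') = (if j = j' then 1 else 0)" using orthon_ip[OF J(2) jj] by simp
    qed (use cfj in auto)
    have fsp: "fj j \<in> spn J e" if "j \<in> J" for j
      unfolding fj_def using spIJ spn_comp[OF fin inv J(3)[rule_format, OF that]] by blast
    define k where "k y = (\<Sum>l\<in>J. e l x * e l y)" for y
    have ck: "continuous_on UNIV k" unfolding k_def using ce by (auto intro!: continuous_intros)
    have fx: "fj j x = ip k (fj j)" if jJ: "j \<in> J" for j
    proof -
      obtain c where c: "fj j = (\<lambda>y. \<Sum>l\<in>J. c l * e l y)" using fsp[OF jJ] unfolding spn_def by blast
      have "ip k (fj j) = (\<Sum>l\<in>J. e l x * ip (e l) (fj j))" unfolding k_def[abs_def]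
        by (rule ip_sum_left) (use ce cfj jJ in auto)
      also have "\<dots> = (\<Sum>l\<in>J. e l x * c l)"
      proof (rule sum.cong[OF refl])
        fix l assume l: "l \<in> J"
        have "ip (e l) (fj j) = ip (fj j) (e l)" by (rule ip_comm)
        also have "\<dots> = c l" unfolding c by (rule coeff[OF J(2) fJ l])
        finally show "e l x * ip (e l) (fj j) = e l x * c l" by simp
      qed
      also have "\<dots> = fj j x" by (simp add: c mult.commute)
      finally show ?thesis by simp
    qed
    have "K (mul h x) = (\<Sum>j\<in>J. (ip k (fj j))^2)" unfolding K_def
      by (rule sum.cong[OF refl]) (simp add: fx[symmetric] fj_def)
    also have "\<dots> \<le> ip k k" by (rule bessel[OF on fJ ck])
    also have "ip k k = K x" unfolding k_def[abs_def] K_def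
      by (rule ip_span_self[OF J(2) fJ])
    finally show ?thesis .
  qed
  have Kc: "K y = K x" for x y
  proof -
    obtain h1 where "mul h1 x = y" using trans by blast
    obtain h2 where "mul h2 y = x" using trans by blast
    then show ?thesis using Kle[of h1 x] Kle[of h2 y] \<open>mul h1 x = y\<close> by simp
  qed
  have intK: "integral\<^sup>L M K = real (card J)"
  proof -
    have "integral\<^sup>L M K = (\<Sum>j\<in>J. ip (e j) (e j))" unfolding K_def[abs_def] ip_def
      by (subst Bochner_Integration.integral_sum) (auto intro!: cont_int continuous_intros ce simp: power2_eq_square)
    also have "\<dots> = (\<Sum>j\<in>J. 1)" by (rule sum.cong[OF refl]) (simp add: orthon_ip[OF J(2)])
    finally show ?thesis by simp
  qed
  have "K = (\<lambda>_. K x)" using Kc by auto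
  then have "integral\<^sup>L M K = K x" by (metis lebesgue_integral_const prob_space mult_1 real_scaleR_def)
  then have Kx: "K x = real (card J)" using intK by simp
  have "(f x)^2 \<le> ip f f * K x" by (rule cs[OF spIJ[OF f]])
  also have "\<dots> \<le> ip f f * real (card I)" unfolding Kx
    by (rule mult_left_mono) (use card_mono[OF fin J(1)] ip_nonneg in auto)
  finally show ?thesis by (simp add: mult.commute)
qed

end



lemma linear_expand:
  fixes L :: "'v::euclidean_space \<Rightarrow> real"
  assumes "linear L"
  shows "L w = (\<Sum>b\<in>Basis. (w \<bullet> b) * L b)"
proof -
  have "L w = L (\<Sum>b\<in>Basis. (w \<bullet> b) *\<^sub>R b)" by (simp add: euclidean_representation)
  also have "\<dots> = (\<Sum>b\<in>Basis. (w \<bullet> b) *\<^sub>R L b)"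
    using assms by (simp add: linear_sum linear_scale)
  finally show ?thesis by simp
qed

definition monoF :: "('g \<Rightarrow> 'v::euclidean_space) \<Rightarrow> 'v multiset \<Rightarrow> 'g \<Rightarrow> real" where
  "monoF \<phi> m g = prod_mset (image_mset (\<lambda>b. b \<bullet> \<phi> g) m)"

lemma monoF_cont:
  fixes \<phi> :: "'g::topological_space \<Rightarrow> 'v::euclidean_space"
  assumes "continuous_on UNIV \<phi>"
  shows "continuous_on UNIV (monoF \<phi> m)"
proof (induction m)
  case empty then show ?case by (simp add: monoF_def)
next
  case (add x m)
  have "monoF \<phi> (add_mset x m) = (\<lambda>g. (x \<bullet> \<phi> g) * monoF \<phi> m g)"
    by (auto simp: monoF_def fun_eq_iff)
  then show ?case using add assms by (auto intro!: continuous_intros)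
qed

lemma poly_span:
  fixes \<phi> :: "'g \<Rightarrow> 'v::euclidean_space"
  assumes "\<And>b. linear (L b)"
  shows "(\<lambda>g. prod_mset (image_mset (\<lambda>b. L b (\<phi> g)) m)) \<in> spn (multisets_of_size Basis (size m)) (monoF \<phi>)"
proof (induction m)
  case empty
  have "multisets_of_size (Basis::'v set) 0 = {{#}}" by (auto simp: multisets_of_size_def)
  moreover have "monoF \<phi> {#} = (\<lambda>g. 1)" by (simp add: monoF_def fun_eq_iff)
  ultimately show ?case using spn_gen[of "{{#}}" "{#}" "monoF \<phi>"] by simp
next
  case (add a m)
  let ?I = "multisets_of_size (Basis::'v set) (size m)"
  let ?I' = "multisets_of_size (Basis::'v set) (size (add_mset a m))"
  have finI: "finite ?I" by (rule finite_multisets_of_size) simp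
  from add obtain c where c: "(\<lambda>g. prod_mset (image_mset (\<lambda>b. L b (\<phi> g)) m)) = (\<lambda>g. \<Sum>i\<in>?I. c i * monoF \<phi> i g)"
    unfolding spn_def by blast
  have eq: "(\<lambda>g. prod_mset (image_mset (\<lambda>b. L b (\<phi> g)) (add_mset a m)))
      = (\<lambda>g. \<Sum>b\<in>Basis. \<Sum>i\<in>?I. (L a b * c i) * monoF \<phi> (add_mset b i) g)"
  proof (rule ext)
    fix g
    have "prod_mset (image_mset (\<lambda>b. L b (\<phi> g)) (add_mset a m))
        = L a (\<phi> g) * (\<Sum>i\<in>?I. c i * monoF \<phi> i g)"
      using fun_cong[OF c, of g] by simp
    also have "\<dots> = (\<Sum>b\<in>Basis. (\<phi> g \<bullet> b) * L a b) * (\<Sum>i\<in>?I. c i * monoF \<phi> i g)"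
      using linear_expand[OF assms] by metis
    also have "\<dots> = (\<Sum>b\<in>Basis. \<Sum>i\<in>?I. (L a b * c i) * ((b \<bullet> \<phi> g) * monoF \<phi> i g))"
      by (simp add: sum_distrib_left sum_distrib_right inner_commute mult_ac) (rule sum.swap)
    also have "\<dots> = (\<Sum>b\<in>Basis. \<Sum>i\<in>?I. (L a b * c i) * monoF \<phi> (add_mset b i) g)"
      by (simp add: monoF_def)
    finally show "prod_mset (image_mset (\<lambda>b. L b (\<phi> g)) (add_mset a m))
      = (\<Sum>b\<in>Basis. \<Sum>i\<in>?I. (L a b * c i) * monoF \<phi> (add_mset b i) g)" .
  qed
  have finI': "finite ?I'" by (rule finite_multisets_of_size) simp
  show ?case unfolding eq
  proof (intro spn_sum finI spn_scale spn_gen[OF finI'])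
    fix b i assume "b \<in> (Basis::'v set)" "i \<in> ?I"
    then show "add_mset b i \<in> ?I'" by (auto simp: multisets_of_size_def)
  qed simp
qed

lemma root_pow: "0 \<le> (x::real) \<Longrightarrow> 0 < n \<Longrightarrow> (x ^ n) powr (1 / real n) = x"
  by (cases "x = 0") (auto simp: powr_realpow[symmetric] powr_powr)

theorem corollary1p5:
  fixes G :: "('g::t2_space, 'b) monoid_scheme"
    and M :: "'g measure"
    and act :: "'g \<Rightarrow> 'v::euclidean_space \<Rightarrow> 'v"
    and v :: 'v and l :: "'v \<Rightarrow> real" and k :: nat
  assumes "compact_group G"
    and "haar_probability G M"
    and "continuous_linear_action G act"
    and "linear l"
    and "k > 0"
  shows "Lp_even_norm M k (\<lambda>g. l (act g v)) \<le> sup_norm (\<lambda>g. l (act g v)) \<and>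
         sup_norm (\<lambda>g. l (act g v))
           \<le> real ((DIM('v) + k - 1) choose k) powr (1 / real (2 * k))
              * Lp_even_norm M k (\<lambda>g. l (act g v))"
proof -
  have grp: "group G" and carr: "carrier G = UNIV" and cpt: "compact (UNIV::'g set)"
    and cmul: "continuous_on UNIV (\<lambda>p::'g \<times> 'g. fst p \<otimes>\<^bsub>G\<^esub> snd p)"
    using assms(1) unfolding compact_group_def by auto
  have setsM: "sets M = sets borel" and ps: "prob_space M"
    and hinv: "\<And>g A. A \<in> sets borel \<Longrightarrow> emeasure M ((\<lambda>x. g \<otimes>\<^bsub>G\<^esub> x) ` A) = emeasure M A"
    using assms(2) unfolding haar_probability_def by auto
  have lin: "\<And>g. linear (act g)" and act1: "act \<one>\<^bsub>G\<^esub> = id"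
    and actm: "\<And>g h. act (g \<otimes>\<^bsub>G\<^esub> h) = act g \<circ> act h"
    and cact: "continuous_on UNIV (\<lambda>p::'g \<times> 'v. act (fst p) (snd p))"
    using assms(3) unfolding continuous_linear_action_def by auto
  interpret L2setup M by (rule L2setup.intro[OF ps]) (unfold_locales, fact setsM, fact cpt)
  interpret group G by (rule grp)
  have spM: "space M = UNIV" using sets_eq_imp_space_eq[OF setsM] by simp
  define mul where "mul h x = h \<otimes>\<^bsub>G\<^esub> x" for h x
  have mulc: "continuous_on UNIV (mul h)" for h
  proof -
    have "continuous_on UNIV (\<lambda>x::'g. (\<lambda>p::'g \<times> 'g. fst p \<otimes>\<^bsub>G\<^esub> snd p) (h, x))"
      by (rule continuous_on_compose2[OF cmul]) (auto intro!: continuous_intros)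
    then show ?thesis unfolding mul_def by simp
  qed
  have inv_l: "mul (inv\<^bsub>G\<^esub> h) (mul h x) = x" for h x
    unfolding mul_def using carr by (simp add: m_assoc[symmetric])
  have inv_r: "mul h (mul (inv\<^bsub>G\<^esub> h) x) = x" for h x
    unfolding mul_def using carr by (simp add: m_assoc[symmetric])
  have mulmeas: "mul h \<in> measurable M M" for h
    using borel_measurable_continuous_onI[OF mulc[of h]] measurable_cong_sets[OF setsM setsM] by simp
  have distr_eq: "distr M M (mul h) = M" for h
  proof (rule measure_eqI)
    fix A assume A: "A \<in> sets (distr M M (mul h))"
    then have A': "A \<in> sets borel" using setsM by simp
    have "mul h -` A \<inter> space M = (\<lambda>x. inv\<^bsub>G\<^esub> h \<otimes>\<^bsub>G\<^esub> x) ` A"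
      unfolding spM using inv_l inv_r unfolding mul_def by (auto simp: image_iff) (metis)
    then show "emeasure (distr M M (mul h)) A = emeasure M A"
      using emeasure_distr[OF mulmeas, of A] A hinv[OF A'] setsM by simp
  qed simp
  have haar: "integral\<^sup>L M (\<lambda>x. f (mul h x)) = integral\<^sup>L M f" if cf: "continuous_on UNIV (f::'g \<Rightarrow> real)" for h f
  proof -
    have "integral\<^sup>L M f = integral\<^sup>L (distr M M (mul h)) f" by (simp add: distr_eq)
    also have "\<dots> = integral\<^sup>L M (\<lambda>x. f (mul h x))"
      by (rule integral_distr[OF mulmeas]) (rule cont_meas[OF cf])
    finally show ?thesis by simp
  qed
  have trans: "\<exists>h. mul h x = y" for x y
    by (rule exI[of _ "y \<otimes>\<^bsub>G\<^esub> inv\<^bsub>G\<^esub> x"]) (use carr in \<open>simp add: mul_def m_assoc\<close>)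
  have pos: "\<forall>x. f x = 0" if cf: "continuous_on UNIV f" and f0: "ip f f = 0" for f
  proof (rule ccontr)
    assume "\<not> (\<forall>x. f x = 0)"
    then obtain x0 where x0: "f x0 \<noteq> 0" by blast
    define U where "U = f -` (- {0})"
    have oU: "open U" unfolding U_def using cf continuous_on_open_vimage[of UNIV f] by auto
    have "AE x in M. f x * f x = 0"
      using f0 unfolding ip_def
      by (subst (asm) integral_nonneg_eq_0_iff_AE) (auto intro!: cont_int continuous_intros cf)
    have UM: "U \<in> sets M" using oU by (simp add: setsM)
    have eqU: "{x \<in> space M. \<not> f x * f x = 0} = U" by (auto simp: spM U_def)
    have U0: "emeasure M U = 0"
      using AE_iff_measurable[OF UM eqU] \<open>AE x in M. f x * f x = 0\<close> by simp
    define V where "V h = mul h ` U" for h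
    have oV: "open (V h)" for h
    proof -
      have "V h = mul (inv\<^bsub>G\<^esub> h) -` U"
      proof (rule Set.set_eqI, rule iffI)
        fix z assume "z \<in> V h"
        then obtain u where "u \<in> U" "z = mul h u" unfolding V_def by blast
        then show "z \<in> mul (inv\<^bsub>G\<^esub> h) -` U" using inv_l by simp
      next
        fix z assume "z \<in> mul (inv\<^bsub>G\<^esub> h) -` U"
        then have "mul h (mul (inv\<^bsub>G\<^esub> h) z) \<in> V h" unfolding V_def by blast
        then show "z \<in> V h" using inv_r by simp
      qed
      then show ?thesis using mulc[of "inv\<^bsub>G\<^esub> h"] oU continuous_on_open_vimage[of UNIV] by auto
    qed
    have V0: "emeasure M (V h) = 0" for h
      using hinv[of U h] oU U0 unfolding V_def mul_def by simp
    have cover: "UNIV \<subseteq> (\<Union>h\<in>UNIV. V h)"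
    proof
      fix y :: 'g
      have "mul (y \<otimes>\<^bsub>G\<^esub> inv\<^bsub>G\<^esub> x0) x0 = y" using carr by (simp add: mul_def m_assoc)
      moreover have "x0 \<in> U" using x0 U_def by simp
      ultimately have "y \<in> V (y \<otimes>\<^bsub>G\<^esub> inv\<^bsub>G\<^esub> x0)" unfolding V_def by (metis imageI)
      then show "y \<in> (\<Union>h\<in>UNIV. V h)" by (rule UN_I[OF UNIV_I])
    qed
    obtain C where C: "finite C" "UNIV \<subseteq> (\<Union>h\<in>C. V h)"
    proof -
      from compactE_image[OF cpt _ cover] oV
      obtain C where "C \<subseteq> UNIV" "finite C" "UNIV \<subseteq> (\<Union>h\<in>C. V h)" by blast
      then show ?thesis using that by blast
    qed
    have oUC: "open (\<Union>h\<in>C. V h)" by (rule open_UN) (simp add: oV)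
    have VM: "V h \<in> sets M" for h using oV[of h] by (simp add: setsM)
    have UCM: "(\<Union>h\<in>C. V h) \<in> sets M" using oUC by (simp add: setsM)
    have "emeasure M (space M) \<le> emeasure M (\<Union>h\<in>C. V h)"
      by (rule emeasure_mono[OF _ UCM]) (use C(2) spM in auto)
    also have "\<dots> \<le> (\<Sum>h\<in>C. emeasure M (V h))"
      by (rule emeasure_subadditive_finite[OF C(1)]) (use VM in auto)
    also have "\<dots> = 0" by (simp add: V0)
    finally show False using emeasure_space_1 by simp
  qed
  define fv where "fv g = l (act g v)" for g
  have cphi: "continuous_on UNIV (\<lambda>g. act g v)"
  proof -
    have "continuous_on UNIV (\<lambda>g::'g. (\<lambda>p::'g \<times> 'v. act (fst p) (snd p)) (g, v))"
      by (rule continuous_on_compose2[OF cact]) (auto intro!: continuous_intros)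
    then show ?thesis by simp
  qed
  have cl: "continuous_on UNIV l"
    by (rule linear_continuous_on) (use assms(4) linear_conv_bounded_linear in blast)
  have cf: "continuous_on UNIV fv" unfolding fv_def
    by (rule continuous_on_compose2[OF cl cphi]) auto
  define I where "I = multisets_of_size (Basis::'v set) k"
  define F where "F = monoF (\<lambda>g. act g v)"
  have finI: "finite I" unfolding I_def by (rule finite_multisets_of_size) simp
  have cardI: "card I = (DIM('v) + k - 1) choose k" unfolding I_def
    by (rule card_multisets_of_size) simp
  have cF: "continuous_on UNIV (F i)" for i unfolding F_def by (rule monoF_cont[OF cphi])
  have inv: "(\<lambda>x. F i (mul h x)) \<in> spn I F" if iI: "i \<in> I" for h i
  proof -
    have linb: "linear (\<lambda>w. b \<bullet> act h w)" for b
    proof -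
      have "linear ((\<lambda>y. b \<bullet> y) \<circ> act h)"
        by (rule linear_compose[OF lin[of h] bounded_linear.linear[OF bounded_linear_inner_right]])
      then show ?thesis by (simp add: o_def)
    qed
    have eq: "(\<lambda>x. F i (mul h x)) = (\<lambda>g. prod_mset (image_mset (\<lambda>b. (\<lambda>b w. b \<bullet> act h w) b (act g v)) i))"
      unfolding F_def monoF_def mul_def by (simp add: actm)
    have "size i = k" using iI unfolding I_def multisets_of_size_def by simp
    then have "(\<lambda>g. prod_mset (image_mset (\<lambda>b. (\<lambda>b w. b \<bullet> act h w) b (act g v)) i)) \<in> spn I F"
      unfolding I_def F_def using poly_span[of "\<lambda>b w. b \<bullet> act h w" "\<lambda>g. act g v" i] linb
      by simp
    then show ?thesis by (subst eq)
  qed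
  have fkin: "(\<lambda>g. fv g ^ k) \<in> spn I F"
    using poly_span[of "\<lambda>_. l" "\<lambda>g. act g v" "replicate_mset k (0::'v)"] assms(4)
    unfolding I_def F_def fv_def by simp
  define N where "N = integral\<^sup>L M (\<lambda>g. fv g ^ (2 * k))"
  define S where "S = sup_norm fv"
  define C where "C = real ((DIM('v) + k - 1) choose k)"
  have sq: "fv g ^ k * fv g ^ k = fv g ^ (2 * k)" for g by (simp add: power_add[symmetric] mult_2)
  have ev: "fv g ^ (2 * k) = \<bar>fv g\<bar> ^ (2 * k)" for g by (simp add: power_even_abs)
  have key: "\<bar>fv g\<bar> ^ (2 * k) \<le> C * N" for g
  proof -
    have "(fv g ^ k)^2 \<le> real (card I) * ip (\<lambda>g. fv g ^ k) (\<lambda>g. fv g ^ k)"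
      by (rule key_bound[OF finI cF pos mulc haar trans inv fkin]) (auto intro: cf)
    then show ?thesis unfolding ip_def C_def cardI N_def
      by (simp add: sq power2_eq_square ev)
  qed
  obtain B where B: "\<And>g. \<bar>fv g\<bar> \<le> B" using cont_bounded[OF cf] by blast
  have bdd: "bdd_above (range (\<lambda>g. \<bar>fv g\<bar>))" using B by (auto intro!: bdd_aboveI)
  have Sge: "\<bar>fv g\<bar> \<le> S" for g unfolding S_def sup_norm_def by (rule cSUP_upper[OF UNIV_I bdd])
  have S0: "0 \<le> S" using Sge[of undefined] by linarith
  have cf2: "continuous_on UNIV (\<lambda>g. fv g ^ (2 * k))" using cf by (auto intro!: continuous_intros)
  have N0: "0 \<le> N" unfolding N_def by (rule integral_nonneg_AE) (simp add: ev)
  have NS: "N \<le> S ^ (2 * k)"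
  proof -
    have "N \<le> integral\<^sup>L M (\<lambda>g. S ^ (2 * k))" unfolding N_def
      by (rule integral_mono[OF cont_int[OF cf2]]) (auto simp: ev intro!: power_mono Sge)
    also have "\<dots> = S ^ (2 * k)" by (simp add: prob_space)
    finally show ?thesis .
  qed
  have k2: "0 < 2 * k" using assms(5) by simp
  have part1: "N powr (1 / real (2 * k)) \<le> S"
  proof -
    have "N powr (1 / real (2 * k)) \<le> (S ^ (2 * k)) powr (1 / real (2 * k))"
      by (rule powr_mono2) (use N0 NS in auto)
    also have "\<dots> = S" by (rule root_pow[OF S0 k2])
    finally show ?thesis .
  qed
  have C0: "0 \<le> C" unfolding C_def by simp
  have part2: "S \<le> C powr (1 / real (2 * k)) * N powr (1 / real (2 * k))"
    unfolding S_def sup_norm_def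
  proof (rule cSUP_least)
    fix g
    have "\<bar>fv g\<bar> = (\<bar>fv g\<bar> ^ (2 * k)) powr (1 / real (2 * k))" by (rule root_pow[symmetric]) (use k2 in auto)
    also have "\<dots> \<le> (C * N) powr (1 / real (2 * k))"
      by (rule powr_mono2) (use key in auto)
    also have "\<dots> = C powr (1 / real (2 * k)) * N powr (1 / real (2 * k))" by (rule powr_mult)
    finally show "\<bar>fv g\<bar> \<le> C powr (1 / real (2 * k)) * N powr (1 / real (2 * k))" .
  qed simp
  show ?thesis
    using part1 part2 unfolding Lp_even_norm_def N_def S_def C_def fv_def by simp
qed


end
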